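(* If an E-space $X$ has a $\sigma$-point-finite base, then $X$ has a $\sigma$-point-finite base consisting of cozero-sets.
   Context: "Space" means topological $T_0$-space. A zero-set (cozero-set) of $X$ is $f^{-1}(0)$ (resp. its complement) for continuous $f:X\to[0,1]$. A U-representation of $V\subseteq X$ is a sequence $(U_n(V))_{n\in\mathbb{N}}$ with $V=\bigcup_n U_n(V)$, $U_n(V)\subseteq U_{n+1}(V)$, $U_{2n-1}(V)$ a zero-set, $U_{2n}(V)$ a cozero-set. A family $\alpha$ is an almost subbase of $X$ if U-representations of its members can be chosen so that $\alpha\cup\{X\setminus U_{2n-1}(V):V\in\alpha,n\in\mathbb{N}\}$ is a subbase of $X$. A family is strongly point-finite if every countably infinite subfamily contains a finite subfamily with empty intersection; $\sigma$-strongly point-finite ($\sigma$-point-finite) means a countable union of strongly point-finite (point-finite) families. An E-space is a space with a $\sigma$-strongly point-finite almost subbase. *)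

theory Defs
  imports "HOL-Analysis.Analysis"
begin

definition zero_set :: "'a topology \<Rightarrow> 'a set \<Rightarrow> bool" where
  "zero_set X Z \<longleftrightarrow>
     (\<exists>f. continuous_map X (top_of_set {0..1::real}) f \<and> Z = {x \<in> topspace X. f x = 0})"

definition cozero_set :: "'a topology \<Rightarrow> 'a set \<Rightarrow> bool" where
  "cozero_set X C \<longleftrightarrow>
     (\<exists>f. continuous_map X (top_of_set {0..1::real}) f \<and> C = topspace X - {x \<in> topspace X. f x = 0})"

text \<open>U-representation \<open>(U n)\<close>, indices \<open>n \<ge> 1\<close> as in the paper (the value at 0 is irrelevant).\<close>
definition U_representation :: "'a topology \<Rightarrow> 'a set \<Rightarrow> (nat \<Rightarrow> 'a set) \<Rightarrow> bool" where
  "U_representation X V U \<longleftrightarrow>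
     V = (\<Union>n\<in>{1..}. U n) \<and>
     (\<forall>n\<ge>1. U n \<subseteq> U (Suc n)) \<and>
     (\<forall>n\<ge>1. zero_set X (U (2*n - 1)) \<and> cozero_set X (U (2*n)))"

text \<open>Subbase: finite intersections (the empty one being the whole space) form a base.\<close>
definition subbase_of :: "'a topology \<Rightarrow> 'a set set \<Rightarrow> bool" where
  "subbase_of X S \<longleftrightarrow>
     (\<forall>U\<in>S. U \<subseteq> topspace X) \<and>
     X = topology (arbitrary union_of (finite intersection_of (\<lambda>U. U \<in> S) relative_to topspace X))"

definition base_of :: "'a topology \<Rightarrow> 'a set set \<Rightarrow> bool" where
  "base_of X B \<longleftrightarrow>
     (\<forall>U\<in>B. openin X U) \<and> (\<forall>W. openin X W \<longrightarrow> (\<exists>C. C \<subseteq> B \<and> \<Union>C = W))"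

definition almost_subbase :: "'a topology \<Rightarrow> 'a set set \<Rightarrow> bool" where
  "almost_subbase X \<alpha> \<longleftrightarrow>
     (\<exists>U :: 'a set \<Rightarrow> nat \<Rightarrow> 'a set.
        (\<forall>V\<in>\<alpha>. U_representation X V (U V)) \<and>
        subbase_of X (\<alpha> \<union> {topspace X - U V (2*n - 1) | V n. V \<in> \<alpha> \<and> n \<ge> 1}))"

definition point_finite :: "'a topology \<Rightarrow> 'a set set \<Rightarrow> bool" where
  "point_finite X F \<longleftrightarrow> (\<forall>x\<in>topspace X. finite {U \<in> F. x \<in> U})"

definition strongly_point_finite :: "'a set set \<Rightarrow> bool" where
  "strongly_point_finite F \<longleftrightarrow>
     (\<forall>G. G \<subseteq> F \<and> countable G \<and> infinite G \<longrightarrow> (\<exists>H. H \<subseteq> G \<and> finite H \<and> \<Inter>H = {}))"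

definition sigma_point_finite :: "'a topology \<Rightarrow> 'a set set \<Rightarrow> bool" where
  "sigma_point_finite X F \<longleftrightarrow>
     (\<exists>Fs :: nat \<Rightarrow> 'a set set. F = (\<Union>n. Fs n) \<and> (\<forall>n. point_finite X (Fs n)))"

definition sigma_strongly_point_finite :: "'a set set \<Rightarrow> bool" where
  "sigma_strongly_point_finite F \<longleftrightarrow>
     (\<exists>Fs :: nat \<Rightarrow> 'a set set. F = (\<Union>n. Fs n) \<and> (\<forall>n. strongly_point_finite (Fs n)))"

definition E_space :: "'a topology \<Rightarrow> bool" where
  "E_space X \<longleftrightarrow> t0_space X \<and>
     (\<exists>\<alpha>. almost_subbase X \<alpha> \<and> sigma_strongly_point_finite \<alpha>)"

end

theory Submission
  imports Defs
begin

lemma cont01_iff: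
  "continuous_map X (top_of_set {0..1::real}) f \<longleftrightarrow>
   continuous_map X euclideanreal f \<and> (\<forall>x\<in>topspace X. 0 \<le> f x \<and> f x \<le> 1)"
  by (auto simp: continuous_map_in_subtopology Pi_iff)

lemma zero_set_subset: "zero_set X Z \<Longrightarrow> Z \<subseteq> topspace X"
  unfolding zero_set_def by auto

lemma cozero_iff_zero:
  "cozero_set X C \<longleftrightarrow> C \<subseteq> topspace X \<and> zero_set X (topspace X - C)"
proof
  assume "cozero_set X C"
  then obtain f where f: "continuous_map X (top_of_set {0..1::real}) f"
      and C: "C = topspace X - {x \<in> topspace X. f x = 0}"
    unfolding cozero_set_def by auto
  have "topspace X - C = {x \<in> topspace X. f x = 0}" using C by auto
  then show "C \<subseteq> topspace X \<and> zero_set X (topspace X - C)"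
    using f C unfolding zero_set_def by auto
next
  assume a: "C \<subseteq> topspace X \<and> zero_set X (topspace X - C)"
  then obtain f where f: "continuous_map X (top_of_set {0..1::real}) f"
      and Z: "topspace X - C = {x \<in> topspace X. f x = 0}"
    unfolding zero_set_def by auto
  have "C = topspace X - {x \<in> topspace X. f x = 0}" using Z a by auto
  then show "cozero_set X C" using f unfolding cozero_set_def by auto
qed

lemma zero_set_empty: "zero_set X {}"
  unfolding zero_set_def
  by (rule exI[of _ "\<lambda>x. 1"]) (auto simp: cont01_iff)

lemma zero_set_topspace: "zero_set X (topspace X)"
  unfolding zero_set_def
  by (rule exI[of _ "\<lambda>x. 0"]) (auto simp: cont01_iff)

lemma zero_set_Un:
  assumes "zero_set X A" "zero_set X B" shows "zero_set X (A \<union> B)"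
proof -
  obtain f where f: "continuous_map X (top_of_set {0..1::real}) f"
      and A: "A = {x \<in> topspace X. f x = 0}" using assms(1) unfolding zero_set_def by auto
  obtain g where g: "continuous_map X (top_of_set {0..1::real}) g"
      and B: "B = {x \<in> topspace X. g x = 0}" using assms(2) unfolding zero_set_def by auto
  have "continuous_map X (top_of_set {0..1::real}) (\<lambda>x. f x * g x)"
    using f g by (auto simp: cont01_iff intro!: continuous_map_real_mult mult_le_one)
  moreover have "A \<union> B = {x \<in> topspace X. f x * g x = 0}" using A B by auto
  ultimately show ?thesis unfolding zero_set_def by blast
qed

lemma zero_set_Int:
  assumes "zero_set X A" "zero_set X B" shows "zero_set X (A \<inter> B)"
proof -
  obtain f where f: "continuous_map X (top_of_set {0..1::real}) f"
      and A: "A = {x \<in> topspace X. f x = 0}" using assms(1) unfolding zero_set_def by auto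
  obtain g where g: "continuous_map X (top_of_set {0..1::real}) g"
      and B: "B = {x \<in> topspace X. g x = 0}" using assms(2) unfolding zero_set_def by auto
  have "continuous_map X (top_of_set {0..1::real}) (\<lambda>x. max (f x) (g x))"
    using f g by (auto simp: cont01_iff intro!: continuous_map_real_max)
  moreover have "A \<inter> B = {x \<in> topspace X. max (f x) (g x) = 0}" using A B f g
    by (auto simp: cont01_iff max_def)
  ultimately show ?thesis unfolding zero_set_def by blast
qed

lemma zero_set_finite_Union:
  assumes "finite Q" "\<And>q. q \<in> Q \<Longrightarrow> zero_set X (Z q)"
  shows "zero_set X (\<Union>q\<in>Q. Z q)"
  using assms by (induction Q rule: finite_induct) (auto intro: zero_set_Un zero_set_empty)

lemma zero_set_finite_Inter:
  assumes "finite Q" "\<And>q. q \<in> Q \<Longrightarrow> zero_set X (Z q)"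
  shows "zero_set X (topspace X \<inter> (\<Inter>q\<in>Q. Z q))"
  using assms
proof (induction Q rule: finite_induct)
  case empty then show ?case by (simp add: zero_set_topspace)
next
  case (insert q Q)
  have "topspace X \<inter> (\<Inter>q\<in>insert q Q. Z q) = Z q \<inter> (topspace X \<inter> (\<Inter>q\<in>Q. Z q))"
    using zero_set_subset[OF insert.prems[of q]] by auto
  then show ?case using insert by (auto intro: zero_set_Int)
qed

lemma cozero_set_Int:
  assumes "cozero_set X A" "cozero_set X B" shows "cozero_set X (A \<inter> B)"
proof -
  have "topspace X - (A \<inter> B) = (topspace X - A) \<union> (topspace X - B)" by auto
  then show ?thesis using assms by (auto simp: cozero_iff_zero intro: zero_set_Un)
qed

lemma cozero_set_topspace: "cozero_set X (topspace X)"
  by (simp add: cozero_iff_zero zero_set_empty)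

lemma cozero_set_finite_Inter:
  assumes "finite Q" "\<And>q. q \<in> Q \<Longrightarrow> cozero_set X (Z q)"
  shows "cozero_set X (topspace X \<inter> (\<Inter>q\<in>Q. Z q))"
  using assms
proof (induction Q rule: finite_induct)
  case empty then show ?case by (simp add: cozero_set_topspace)
next
  case (insert q Q)
  have "topspace X \<inter> (\<Inter>q\<in>insert q Q. Z q) = Z q \<inter> (topspace X \<inter> (\<Inter>q\<in>Q. Z q))"
    using insert.prems[of q] by (auto simp: cozero_iff_zero)
  then show ?case using insert by (auto intro: cozero_set_Int)
qed

lemma cozero_open: "cozero_set X C \<Longrightarrow> openin X C"
proof -
  assume "cozero_set X C"
  then obtain f where f: "continuous_map X (top_of_set {0..1::real}) f"
      and C: "C = topspace X - {x \<in> topspace X. f x = 0}"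
    unfolding cozero_set_def by auto
  have fc: "continuous_map X euclideanreal f" using f by (simp add: cont01_iff)
  have "openin X {x \<in> topspace X. f x \<in> - {0}}"
    using openin_continuous_map_preimage[OF fc, of "-{0}"] by auto
  moreover have "C = {x \<in> topspace X. f x \<in> - {0}}" using C by auto
  ultimately show ?thesis by simp
qed



lemma transversals_finite:
  fixes G :: "'i set set"
  assumes "\<forall>g\<in>G. finite g \<and> card g \<le> s"
  shows "\<exists>QQ. finite QQ \<and> (\<forall>Q\<in>QQ. finite Q \<and> (\<forall>g\<in>G. g \<inter> Q \<noteq> {})) \<and>
     (\<forall>P. finite P \<and> (\<forall>g\<in>G. g \<inter> P \<noteq> {}) \<longrightarrow> (\<exists>Q\<in>QQ. Q \<subseteq> P))"
  using assms
proof (induction s arbitrary: G)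
  case 0
  show ?case
  proof (cases "G = {}")
    case True
    then show ?thesis by (intro exI[of _ "{{}}"]) auto
  next
    case False
    then obtain g where "g \<in> G" by auto
    with 0 have "g = {}" by auto
    with \<open>g \<in> G\<close> show ?thesis by (intro exI[of _ "{}"]) auto
  qed
next
  case (Suc s)
  show ?case
  proof (cases "\<exists>P0. finite P0 \<and> (\<forall>g\<in>G. g \<inter> P0 \<noteq> {})")
    case False
    then show ?thesis by (intro exI[of _ "{}"]) auto
  next
    case True
    then obtain P0 where P0: "finite P0" "\<forall>g\<in>G. g \<inter> P0 \<noteq> {}" by auto
    define GR where "GR R = (\<lambda>g. g - P0) ` {g\<in>G. g \<inter> R = {}}" for R
    have GRb: "\<forall>g\<in>GR R. finite g \<and> card g \<le> s" for R
    proof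
      fix h assume "h \<in> GR R"
      then obtain g where g: "g \<in> G" "h = g - P0" unfolding GR_def by auto
      have fg: "finite g" "card g \<le> Suc s" using Suc.prems g by auto
      have "card (g - P0) < card g"
      proof (rule psubset_card_mono[OF fg(1)])
        show "g - P0 \<subset> g" using P0(2) g(1) by auto
      qed
      then show "finite h \<and> card h \<le> s" using g fg by auto
    qed
    define Prop where "Prop R QQ \<longleftrightarrow> finite QQ \<and> (\<forall>Q\<in>QQ. finite Q \<and> (\<forall>g\<in>GR R. g \<inter> Q \<noteq> {})) \<and>
     (\<forall>P. finite P \<and> (\<forall>g\<in>GR R. g \<inter> P \<noteq> {}) \<longrightarrow> (\<exists>Q\<in>QQ. Q \<subseteq> P))" for R QQ
    have ex: "\<exists>QQ. Prop R QQ" for R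
      unfolding Prop_def by (rule Suc.IH[OF GRb])
    define QQ where "QQ R = (SOME QQ. Prop R QQ)" for R
    have PQQ: "Prop R (QQ R)" for R unfolding QQ_def by (rule someI_ex[OF ex])
    have QQ: "\<And>R. finite (QQ R)"
      "\<And>R Q. Q \<in> QQ R \<Longrightarrow> finite Q \<and> (\<forall>g\<in>GR R. g \<inter> Q \<noteq> {})"
      "\<And>R P. finite P \<Longrightarrow> (\<forall>g\<in>GR R. g \<inter> P \<noteq> {}) \<Longrightarrow> (\<exists>Q\<in>QQ R. Q \<subseteq> P)"
      using PQQ unfolding Prop_def by blast+
    define RR where "RR = (\<Union>R\<in>Pow P0. (\<lambda>Q. R \<union> Q) ` QQ R)"
    show ?thesis
    proof (intro exI[of _ RR] conjI allI ballI impI)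
      show "finite RR" unfolding RR_def using P0(1) QQ(1) by (intro finite_UN_I finite_imageI) auto
    next
      fix Q assume "Q \<in> RR"
      then obtain R Q' where R: "R \<subseteq> P0" "Q' \<in> QQ R" "Q = R \<union> Q'" unfolding RR_def by auto
      show "finite Q" using R(3) QQ(2)[OF R(2)] finite_subset[OF R(1) P0(1)] by simp
    next
      fix Q g assume "Q \<in> RR" "g \<in> G"
      then obtain R Q' where R: "R \<subseteq> P0" "Q' \<in> QQ R" "Q = R \<union> Q'" unfolding RR_def by auto
      show "g \<inter> Q \<noteq> {}"
      proof (cases "g \<inter> R = {}")
        case True
        then have "g - P0 \<in> GR R" using \<open>g \<in> G\<close> unfolding GR_def by auto
        then have "(g - P0) \<inter> Q' \<noteq> {}" using QQ(2)[OF R(2)] by auto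
        then show ?thesis using R by auto
      next
        case False then show ?thesis using R(3) by blast
      qed
    next
      fix P assume P: "finite P \<and> (\<forall>g\<in>G. g \<inter> P \<noteq> {})"
      define R where "R = P \<inter> P0"
      have hP: "\<forall>h\<in>GR R. h \<inter> P \<noteq> {}"
      proof
        fix h assume "h \<in> GR R"
        then obtain g where g: "g \<in> G" "g \<inter> R = {}" "h = g - P0" unfolding GR_def by auto
        then show "h \<inter> P \<noteq> {}" using P unfolding R_def by auto
      qed
      from QQ(3)[of P R] P hP obtain Q where Q: "Q \<in> QQ R" "Q \<subseteq> P" by blast
      have "R \<in> Pow P0" "R \<subseteq> P" unfolding R_def by auto
      then have "R \<union> Q \<in> RR" unfolding RR_def using Q(1) by (intro UN_I[of R]) auto
      moreover have "R \<union> Q \<subseteq> P" using Q(2) \<open>R \<subseteq> P\<close> by blast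
      ultimately show "\<exists>Q\<in>RR. Q \<subseteq> P" by blast
    qed
  qed
qed

lemma zero_set_transversal_Inter:
  fixes Z :: "'i \<Rightarrow> 'a set" and G :: "'i set set"
  assumes Zz: "\<And>i. zero_set X (Z i)" and fin: "\<And>x. x \<in> topspace X \<Longrightarrow> finite {i. x \<in> Z i}"
    and G: "\<forall>g\<in>G. finite g \<and> card g \<le> s"
  shows "zero_set X (topspace X \<inter> (\<Inter>g\<in>G. \<Union>i\<in>g. Z i))"
proof -
  obtain QQ where QQ: "finite QQ" "\<And>Q. Q \<in> QQ \<Longrightarrow> finite Q \<and> (\<forall>g\<in>G. g \<inter> Q \<noteq> {})"
     "\<And>P. finite P \<Longrightarrow> (\<forall>g\<in>G. g \<inter> P \<noteq> {}) \<Longrightarrow> (\<exists>Q\<in>QQ. Q \<subseteq> P)"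
    using transversals_finite[OF G] by metis
  have eq: "topspace X \<inter> (\<Inter>g\<in>G. \<Union>i\<in>g. Z i) = (\<Union>Q\<in>QQ. topspace X \<inter> (\<Inter>i\<in>Q. Z i))"
  proof
    show "topspace X \<inter> (\<Inter>g\<in>G. \<Union>i\<in>g. Z i) \<subseteq> (\<Union>Q\<in>QQ. topspace X \<inter> (\<Inter>i\<in>Q. Z i))"
    proof
      fix x assume x: "x \<in> topspace X \<inter> (\<Inter>g\<in>G. \<Union>i\<in>g. Z i)"
      define P where "P = {i. x \<in> Z i}"
      have "finite P" using fin x unfolding P_def by auto
      moreover have "\<forall>g\<in>G. g \<inter> P \<noteq> {}" using x unfolding P_def by auto
      ultimately obtain Q where "Q \<in> QQ" "Q \<subseteq> P" using QQ(3) by blast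
      then show "x \<in> (\<Union>Q\<in>QQ. topspace X \<inter> (\<Inter>i\<in>Q. Z i))" using x unfolding P_def by auto
    qed
    show "(\<Union>Q\<in>QQ. topspace X \<inter> (\<Inter>i\<in>Q. Z i)) \<subseteq> topspace X \<inter> (\<Inter>g\<in>G. \<Union>i\<in>g. Z i)"
    proof
      fix x assume "x \<in> (\<Union>Q\<in>QQ. topspace X \<inter> (\<Inter>i\<in>Q. Z i))"
      then obtain Q where Q: "Q \<in> QQ" "x \<in> topspace X" "\<forall>i\<in>Q. x \<in> Z i" by auto
      have "\<forall>g\<in>G. \<exists>i\<in>g. x \<in> Z i"
      proof
        fix g assume "g \<in> G"
        then obtain i where "i \<in> g" "i \<in> Q" using QQ(2)[OF Q(1)] by auto
        then show "\<exists>i\<in>g. x \<in> Z i" using Q(3) by auto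
      qed
      then show "x \<in> topspace X \<inter> (\<Inter>g\<in>G. \<Union>i\<in>g. Z i)" using Q(2) by auto
    qed
  qed
  show ?thesis unfolding eq
    by (rule zero_set_finite_Union[OF QQ(1)]) (rule zero_set_finite_Inter, use QQ(2) Zz in auto)
qed

lemma spf_point_finite:
  assumes "strongly_point_finite F" shows "finite {V\<in>F. x \<in> V}"
proof (rule ccontr)
  assume "infinite {V\<in>F. x \<in> V}"
  then obtain C where C: "C \<subseteq> {V\<in>F. x \<in> V}" "countable C" "infinite C"
    using infinite_countable_subset'[of "{V\<in>F. x \<in> V}"] by blast
  have sp: "\<forall>G. G \<subseteq> F \<and> countable G \<and> infinite G \<longrightarrow> (\<exists>H. H \<subseteq> G \<and> finite H \<and> \<Inter>H = {})"
    using assms unfolding strongly_point_finite_def .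
  have "C \<subseteq> F" using C(1) by blast
  then have "\<exists>H. H \<subseteq> C \<and> finite H \<and> \<Inter>H = {}" using sp C(2,3) by simp
  then obtain H where H: "H \<subseteq> C" "finite H" "\<Inter>H = {}" by blast
  have "x \<in> \<Inter>H" using H(1) C(1) by auto
  then show False using H(3) by auto
qed

lemma Urep_mono:
  assumes "U_representation X V U" "1 \<le> n" "n \<le> p"
  shows "U n \<subseteq> U p"
  using assms(3)
proof (induction p)
  case 0 then show ?case using assms(2) by simp
next
  case (Suc p)
  show ?case
  proof (cases "n = Suc p")
    case False
    then have "n \<le> p" using Suc.prems by simp
    then have "U n \<subseteq> U p" using Suc.IH by simp
    moreover have "\<forall>n\<ge>1. U n \<subseteq> U (Suc n)" using assms(1)
      unfolding U_representation_def by blast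
    then have "U p \<subseteq> U (Suc p)" using \<open>n \<le> p\<close> assms(2) by simp
    ultimately show ?thesis by blast
  qed simp
qed

theorem corollary5p8:
  fixes X :: "'a topology"
  assumes "E_space X"
    and "\<exists>B. base_of X B \<and> sigma_point_finite X B"
  shows "\<exists>B. base_of X B \<and> sigma_point_finite X B \<and> (\<forall>U\<in>B. cozero_set X U)"
proof -
  define T where "T = topspace X"
  obtain \<alpha> where al: "almost_subbase X \<alpha>" "sigma_strongly_point_finite \<alpha>"
    using assms(1) unfolding E_space_def by blast
  obtain U where Urep: "\<And>V. V \<in> \<alpha> \<Longrightarrow> U_representation X V (U V)"
    and sb: "subbase_of X (\<alpha> \<union> {topspace X - U V (2*n - 1) | V n. V \<in> \<alpha> \<and> n \<ge> 1})"
    using al(1) unfolding almost_subbase_def by blast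
  define S where "S = \<alpha> \<union> {topspace X - U V (2*n - 1) | V n. V \<in> \<alpha> \<and> n \<ge> 1}"
  obtain Fs :: "nat \<Rightarrow> 'a set set" where Fs: "\<alpha> = (\<Union>n. Fs n)" "\<And>n. strongly_point_finite (Fs n)"
    using al(2) unfolding sigma_strongly_point_finite_def by blast
  obtain B and Bs :: "nat \<Rightarrow> 'a set set" where B: "base_of X B" "B = (\<Union>n. Bs n)" "\<And>n. point_finite X (Bs n)"
    using assms(2) unfolding sigma_point_finite_def by blast
  have Fpf: "finite {V\<in>Fs k. x \<in> V}" for k x using spf_point_finite[OF Fs(2)] .
  have Usub: "U V n \<subseteq> V" if "V \<in> \<alpha>" "1 \<le> n" for V n
  proof -
    have "V = (\<Union>n\<in>{1..}. U V n)" using Urep[OF that(1)] unfolding U_representation_def by blast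
    then show ?thesis using that(2) by blast
  qed
  have Uz: "zero_set X (U V (2*n - 1))" "cozero_set X (U V (2*n))" if "V \<in> \<alpha>" "1 \<le> n" for V n
  proof -
    have "\<forall>n\<ge>1. zero_set X (U V (2*n - 1)) \<and> cozero_set X (U V (2*n))"
      using Urep[OF that(1)] unfolding U_representation_def by blast
    then show "zero_set X (U V (2*n - 1))" "cozero_set X (U V (2*n))" using that(2) by blast+
  qed
  have Ucov: "\<exists>m\<ge>1. x \<in> U V (2*m)" if Va: "V \<in> \<alpha>" and xV: "x \<in> V" for V x
  proof -
    have "V = (\<Union>n\<in>{1..}. U V n)" using Urep[OF Va] unfolding U_representation_def by blast
    then obtain n where n: "n \<ge> 1" "x \<in> U V n" using xV by auto
    have "U V n \<subseteq> U V (2*n)" using Urep_mono[OF Urep[OF Va] n(1)] by simp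
    then show ?thesis using n by blast
  qed
  have sbS: "subbase_of X S" using sb unfolding S_def .
  have Xeq: "X = topology (arbitrary union_of (finite intersection_of (\<lambda>U. U \<in> S) relative_to T))"
    using sbS unfolding subbase_of_def T_def by (rule conjunct2)
  have opens: "openin X W \<longleftrightarrow> (arbitrary union_of (finite intersection_of (\<lambda>U. U \<in> S) relative_to T)) W" for W
    by (subst Xeq) (rule openin_subbase)
  have ST: "\<forall>s\<in>S. s \<subseteq> T"
    using sbS unfolding subbase_of_def T_def by (rule conjunct1)

  define zz :: "nat \<times> nat \<times> 'a set \<Rightarrow> 'a set" where "zz i = U (snd (snd i)) (2 * fst (snd i) - 1)" for i
  define cz :: "nat \<times> nat \<times> 'a set \<Rightarrow> 'a set" where "cz i = U (snd (snd i)) (2 * fst (snd i))" for i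
  define IN where "IN N = {i. fst i \<le> N \<and> 1 \<le> fst (snd i) \<and> fst (snd i) \<le> N \<and> snd (snd i) \<in> Fs (fst i)}" for N
  define Aset where "Aset N = {a. finite a \<and> a \<subseteq> IN N}" for N
  define Aof where "Aof a = T \<inter> (\<Inter>i\<in>a. cz i)" for a
  define GG where "GG W N a = {g. g \<subseteq> IN N \<and> finite g \<and> card g \<le> N \<and> Aof a \<inter> (T - (\<Union>i\<in>g. zz i)) \<subseteq> W}" for W N a
  define Yof where "Yof W N a = T \<inter> (\<Inter>g\<in>GG W N a. \<Union>i\<in>g. zz i)" for W N a
  define Cof where "Cof W N a = Aof a - Yof W N a" for W N a
  define Fam where "Fam m N = {Cof W N a | W a. W \<in> Bs m \<and> a \<in> Aset N}" for m N
  define B' where "B' = (\<Union>j. Fam (fst (prod_decode j)) (snd (prod_decode j)))"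

  have IN_al: "snd (snd i) \<in> \<alpha> \<and> 1 \<le> fst (snd i)" if "i \<in> IN N" for i N
    using that Fs(1) unfolding IN_def by auto
  have IN_fin: "finite {i\<in>IN N. x \<in> snd (snd i)}" for N x
  proof (rule finite_subset)
    show "{i\<in>IN N. x \<in> snd (snd i)} \<subseteq> {..N} \<times> {..N} \<times> (\<Union>k\<le>N. {V\<in>Fs k. x \<in> V})"
      unfolding IN_def by force
    show "finite ({..N} \<times> {..N} \<times> (\<Union>k\<le>N. {V\<in>Fs k. x \<in> V}))"
      using Fpf by auto
  qed
  have Cof_sub: "Cof W N a \<subseteq> W" for W N a
    unfolding Cof_def Yof_def GG_def Aof_def T_def by blast
  have czc: "cozero_set X (cz i)" if "i \<in> IN N" for i N
    using IN_al[OF that] Uz(2) unfolding cz_def by blast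
  have zzz: "zero_set X (zz i)" if "i \<in> IN N" for i N
    using IN_al[OF that] Uz(1) unfolding zz_def by blast
  have zzsub: "zz i \<subseteq> snd (snd i)" if "i \<in> IN N" for i N
  proof -
    have "1 \<le> fst (snd i)" using IN_al[OF that] by simp
    then have "1 \<le> 2 * fst (snd i) - 1" by arith
    then show ?thesis using IN_al[OF that] Usub unfolding zz_def by blast
  qed
  have czsub: "cz i \<subseteq> snd (snd i)" if "i \<in> IN N" for i N
  proof -
    have "1 \<le> 2 * fst (snd i)" using IN_al[OF that] by simp
    then show ?thesis using IN_al[OF that] Usub unfolding cz_def by blast
  qed
  have Cof_cozero: "cozero_set X (Cof W N a)" if aA: "a \<in> Aset N" for W N a
  proof -
    have Ac: "cozero_set X (Aof a)" unfolding Aof_def T_def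
    proof (rule cozero_set_finite_Inter)
      show "finite a" using aA unfolding Aset_def by simp
      show "cozero_set X (cz i)" if "i \<in> a" for i
        using czc[of i N] that aA unfolding Aset_def by blast
    qed
    define Z' where "Z' i = (if i \<in> IN N then zz i else {})" for i
    have Yeq: "Yof W N a = topspace X \<inter> (\<Inter>g\<in>GG W N a. \<Union>i\<in>g. Z' i)"
    proof -
      have "(\<Union>i\<in>g. Z' i) = (\<Union>i\<in>g. zz i)" if "g \<in> GG W N a" for g
      proof -
        have "g \<subseteq> IN N" using that unfolding GG_def by blast
        then show ?thesis unfolding Z'_def by auto
      qed
      then show ?thesis unfolding Yof_def T_def by (simp cong: INF_cong)
    qed
    have Yz: "zero_set X (Yof W N a)" unfolding Yeq
    proof (rule zero_set_transversal_Inter)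
      show "zero_set X (Z' i)" for i unfolding Z'_def by (simp add: zzz zero_set_empty)
      show "finite {i. x \<in> Z' i}" for x
      proof (rule finite_subset[OF _ IN_fin[of N x]])
        show "{i. x \<in> Z' i} \<subseteq> {i \<in> IN N. x \<in> snd (snd i)}"
        proof
          fix i assume "i \<in> {i. x \<in> Z' i}"
          then have "i \<in> IN N" "x \<in> zz i" unfolding Z'_def by (auto split: if_splits)
          then show "i \<in> {i \<in> IN N. x \<in> snd (snd i)}" using zzsub[of i N] by blast
        qed
      qed
      show "\<forall>g\<in>GG W N a. finite g \<and> card g \<le> N" unfolding GG_def by blast
    qed
    have YT: "Yof W N a \<subseteq> T" unfolding Yof_def by blast
    have Cc: "cozero_set X (T - Yof W N a)"
      unfolding cozero_iff_zero T_def[symmetric] using YT Yz by (simp add: Diff_Diff_Int Int_absorb1)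
    have "Cof W N a = Aof a \<inter> (T - Yof W N a)" unfolding Cof_def Aof_def by blast
    then show ?thesis using Ac Cc cozero_set_Int by simp
  qed
  have IN_mono: "IN N \<subseteq> IN N'" if "N \<le> N'" for N N'
    using that unfolding IN_def by auto
  have aux: "\<exists>N a g. a \<in> Aset N \<and> g \<subseteq> IN N \<and> finite g \<and> card g \<le> N \<and> x \<in> Aof a \<and>
      x \<notin> (\<Union>i\<in>g. zz i) \<and> Aof a \<inter> (T - (\<Union>i\<in>g. zz i)) \<subseteq> \<Inter>F"
    if "finite F" "F \<subseteq> S" "x \<in> T" "x \<in> \<Inter>F" for F x
    using that
  proof (induction F rule: finite_induct)
    case empty
    have "{} \<in> Aset 0" unfolding Aset_def by simp
    moreover have "Aof {} = T" unfolding Aof_def by simp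
    ultimately show ?case using empty.prems by (intro exI[of _ 0] exI[of _ "{}"]) auto
  next
    case (insert f F)
    then obtain N a g where IH: "a \<in> Aset N" "g \<subseteq> IN N" "finite g" "card g \<le> N" "x \<in> Aof a"
      "x \<notin> (\<Union>i\<in>g. zz i)" "Aof a \<inter> (T - (\<Union>i\<in>g. zz i)) \<subseteq> \<Inter>F" by auto
    have fS: "f \<in> S" and xf: "x \<in> f" using insert.prems by auto
    show ?case
    proof (cases "f \<in> \<alpha>")
      case True
      then obtain k where k: "f \<in> Fs k" using Fs(1) by blast
      obtain m where m: "m \<ge> 1" "x \<in> U f (2*m)" using Ucov[OF True xf] by blast
      define i where "i = (k, m, f)"
      define N' where "N' = N + k + m"
      have NN: "N \<le> N'" unfolding N'_def by simp
      have iN: "i \<in> IN N'" unfolding IN_def i_def N'_def using k m by simp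
      have a': "insert i a \<in> Aset N'" using IH(1) IN_mono[OF NN] iN unfolding Aset_def by blast
      have g': "g \<subseteq> IN N'" "card g \<le> N'" using IH(2,4) IN_mono[OF NN] NN by auto
      have cz_i: "cz i = U f (2*m)" unfolding cz_def i_def by simp
      have xA: "x \<in> Aof (insert i a)" using IH(5) m(2) cz_i unfolding Aof_def by blast
      have AA: "Aof (insert i a) = Aof a \<inter> cz i" unfolding Aof_def by blast
      have "cz i \<subseteq> f" using czsub[OF iN] unfolding i_def by simp
      then have "Aof (insert i a) \<inter> (T - (\<Union>i\<in>g. zz i)) \<subseteq> \<Inter>(insert f F)"
        using IH(7) AA by blast
      then show ?thesis using a' g' IH(3,6) xA by blast
    next
      case False
      then obtain V n where Vn: "f = T - U V (2*n - 1)" "V \<in> \<alpha>" "n \<ge> 1"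
        using fS unfolding S_def T_def by blast
      then obtain k where k: "V \<in> Fs k" using Fs(1) by blast
      define i where "i = (k, n, V)"
      define N' where "N' = N + k + n + 1"
      have NN: "N \<le> N'" unfolding N'_def by simp
      have iN: "i \<in> IN N'" unfolding IN_def i_def N'_def using k Vn(3) by simp
      have a': "a \<in> Aset N'" using IH(1) IN_mono[OF NN] unfolding Aset_def by blast
      have g'1: "insert i g \<subseteq> IN N'" using IH(2) IN_mono[OF NN] iN by blast
      have "card (insert i g) \<le> card g + 1" using IH(3) by (simp add: card_insert_if)
      then have g'2: "card (insert i g) \<le> N'" using IH(4) unfolding N'_def by simp
      have zz_i: "zz i = U V (2*n - 1)" unfolding zz_def i_def by simp
      have xz: "x \<notin> (\<Union>i\<in>insert i g. zz i)" using IH(6) xf Vn(1) zz_i by blast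
      have "Aof a \<inter> (T - (\<Union>i\<in>insert i g. zz i)) \<subseteq> \<Inter>(insert f F)"
        using IH(7) Vn(1) zz_i by blast
      then show ?thesis using a' g'1 g'2 IH(3,5) xz by blast
    qed
  qed
  have Cof_cover: "\<exists>N a. a \<in> Aset N \<and> x \<in> Cof W N a" if oW: "openin X W" and xW: "x \<in> W" for W x
  proof -
    have "(arbitrary union_of (finite intersection_of (\<lambda>U. U \<in> S) relative_to T)) W"
      using oW opens by blast
    then obtain \<U> where U1: "\<U> \<subseteq> Collect (finite intersection_of (\<lambda>U. U \<in> S) relative_to T)" "\<Union>\<U> = W"
      unfolding union_of_def by blast
    then obtain u where u: "u \<in> \<U>" "x \<in> u" using xW by blast
    then have "(finite intersection_of (\<lambda>U. U \<in> S) relative_to T) u" using U1(1) by blast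
    then obtain v where v: "(finite intersection_of (\<lambda>U. U \<in> S)) v" "T \<inter> v = u"
      unfolding relative_to_def by blast
    then obtain F where F: "finite F" "F \<subseteq> Collect (\<lambda>U. U \<in> S)" "\<Inter>F = v"
      unfolding intersection_of_def by blast
    have uW: "u \<subseteq> W" using u(1) U1(2) by blast
    have "F \<subseteq> S" "x \<in> T" "x \<in> \<Inter>F" using F v u by auto
    then obtain N a g where ag: "a \<in> Aset N" "g \<subseteq> IN N" "finite g" "card g \<le> N" "x \<in> Aof a"
      "x \<notin> (\<Union>i\<in>g. zz i)" "Aof a \<inter> (T - (\<Union>i\<in>g. zz i)) \<subseteq> \<Inter>F"
      using aux[OF F(1)] by blast
    have "Aof a \<subseteq> T" unfolding Aof_def by blast
    then have "Aof a \<inter> (T - (\<Union>i\<in>g. zz i)) \<subseteq> W" using ag(7) F(3) v(2) uW by blast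
    then have "g \<in> GG W N a" unfolding GG_def using ag(2,3,4) by blast
    then have "x \<notin> Yof W N a" using ag(6) unfolding Yof_def by blast
    then have "x \<in> Cof W N a" using ag(5) unfolding Cof_def by blast
    then show ?thesis using ag(1) by blast
  qed
  have Fam_pf: "point_finite X (Fam m N)" for m N
    unfolding point_finite_def
  proof
    fix x assume x: "x \<in> topspace X"
    define D where "D = {W \<in> Bs m. x \<in> W} \<times> Pow {i\<in>IN N. x \<in> snd (snd i)}"
    have "finite {W \<in> Bs m. x \<in> W}" using B(3)[of m] x unfolding point_finite_def by blast
    then have fD: "finite D" unfolding D_def using IN_fin[of N x] by simp
    have sub: "{c \<in> Fam m N. x \<in> c} \<subseteq> (\<lambda>(W,a). Cof W N a) ` D"
    proof
      fix c assume "c \<in> {c \<in> Fam m N. x \<in> c}"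
      then obtain W a where c: "c = Cof W N a" "W \<in> Bs m" "a \<in> Aset N" "x \<in> c"
        unfolding Fam_def by blast
      have xW: "x \<in> W" using Cof_sub c by blast
      have xA: "x \<in> Aof a" using c unfolding Cof_def by blast
      have "a \<subseteq> {i\<in>IN N. x \<in> snd (snd i)}"
      proof
        fix i assume ia: "i \<in> a"
        then have iN: "i \<in> IN N" using c(3) unfolding Aset_def by blast
        moreover have "x \<in> cz i" using xA ia unfolding Aof_def by blast
        ultimately show "i \<in> {i\<in>IN N. x \<in> snd (snd i)}" using czsub[of i N] by blast
      qed
      then have "(W, a) \<in> D" unfolding D_def using c(2) xW by blast
      then show "c \<in> (\<lambda>(W,a). Cof W N a) ` D" using c(1) by (auto intro!: image_eqI[of _ _ "(W,a)"])
    qed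
    show "finite {c \<in> Fam m N. x \<in> c}"
      using finite_subset[OF sub finite_imageI[OF fD]] .
  qed
  have inB': "c \<in> B' \<longleftrightarrow> (\<exists>m N. c \<in> Fam m N)" for c
  proof
    assume "c \<in> B'" then show "\<exists>m N. c \<in> Fam m N" unfolding B'_def by blast
  next
    assume "\<exists>m N. c \<in> Fam m N"
    then obtain m N where "c \<in> Fam m N" by blast
    moreover have "prod_decode (prod_encode (m, N)) = (m, N)" by (rule prod_encode_inverse)
    ultimately show "c \<in> B'" unfolding B'_def
      by (intro UN_I[of "prod_encode (m, N)"]) auto
  qed
  have B'coz: "\<forall>c\<in>B'. cozero_set X c"
  proof
    fix c assume "c \<in> B'"
    then obtain m N where "c \<in> Fam m N" using inB' by blast
    then obtain W a where "c = Cof W N a" "a \<in> Aset N" unfolding Fam_def by blast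
    then show "cozero_set X c" using Cof_cozero by blast
  qed
  have "base_of X B'"
    unfolding base_of_def
  proof (intro conjI allI impI)
    show "\<forall>c\<in>B'. openin X c" using B'coz cozero_open by blast
  next
    fix W assume oW: "openin X W"
    show "\<exists>C. C \<subseteq> B' \<and> \<Union>C = W"
    proof (intro exI[of _ "{c\<in>B'. c \<subseteq> W}"] conjI)
      show "{c\<in>B'. c \<subseteq> W} \<subseteq> B'" by blast
      show "\<Union>{c\<in>B'. c \<subseteq> W} = W"
      proof
        show "\<Union>{c\<in>B'. c \<subseteq> W} \<subseteq> W" by blast
        show "W \<subseteq> \<Union>{c\<in>B'. c \<subseteq> W}"
        proof
          fix x assume xW: "x \<in> W"
          obtain C where C: "C \<subseteq> B" "\<Union>C = W" using B(1) oW unfolding base_of_def by blast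
          then obtain W0 where W0: "W0 \<in> B" "x \<in> W0" "W0 \<subseteq> W" using xW by blast
          have oW0: "openin X W0" using B(1) W0(1) unfolding base_of_def by blast
          obtain m where m: "W0 \<in> Bs m" using W0(1) B(2) by blast
          obtain N a where Na: "a \<in> Aset N" "x \<in> Cof W0 N a" using Cof_cover[OF oW0 W0(2)] by blast
          have "Cof W0 N a \<in> Fam m N" unfolding Fam_def using m Na(1) by blast
          then have "Cof W0 N a \<in> B'" using inB' by blast
          moreover have "Cof W0 N a \<subseteq> W" using Cof_sub W0(3) by blast
          ultimately show "x \<in> \<Union>{c\<in>B'. c \<subseteq> W}" using Na(2) by blast
        qed
      qed
    qed
  qed
  moreover have "sigma_point_finite X B'"
    unfolding sigma_point_finite_def
    by (rule exI[of _ "\<lambda>j. Fam (fst (prod_decode j)) (snd (prod_decode j))"]) (simp add: B'_def Fam_pf)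
  ultimately show ?thesis using B'coz by blast
qed

end
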